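(* Let $1<\alpha<2$ and let $\{G(n)\}$ be a sequence of random intersection graphs satisfying conditions (A) and (PL) with this $\alpha$. Suppose that for some $\beta>\alpha-1$ we have $m=\Omega(n^\beta)$. Then there is a constant $\delta>0$ such that $\omega'(G(n))\le n^{1-\alpha/2-\delta}$ with probability tending to $1$.
   Context: Random intersection graph: given positive integers $n,m$ and a probability measure $P$ on $\{0,\dots,m\}$, $G(n,m,P)$ has vertex set $V=[n]$ and attribute set $W=\{w_1,\dots,w_m\}$; independent random subsets $S_1,\dots,S_n\subseteq W$ with $\mathbb P(S_v=S)=P(|S|)/\binom{m}{|S|}$; distinct $u,v$ adjacent iff $S_u\cap S_v\ne\emptyset$. For a sequence $G(n)=G(n,m(n),P(n))$ with $m(n)\to\infty$, $X(n)$ has law $P(n)$ and $Y(n)=(n/m)^{1/2}X(n)$. Condition (A): $\mathbb E\,Y(n)=O(1)$. Condition (PL): there are a slowly varying $L$ and $\varepsilon_0\in(0,1/2)$ such that for every sequence $x_n$ with $n^{1/2-\varepsilon_0}\le x_n\le n^{1/2+\varepsilon_0}$, $\mathbb P(Y(n)\ge x_n)\sim L(x_n)x_n^{-\alpha}$. $\omega'(G(n))=\max_{w\in W}|\{v: w\in S_v\}|$. *)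

theory Defs
  imports "HOL-Probability.Probability" "HOL-Library.Landau_Symbols"
begin

text \<open>Attribute set W = {0..<m}; vertex set V = {0..<n}.
  Random attribute set of one vertex: P(S_v = S) = P(|S|) / (m choose |S|).\<close>
definition attr_set_pmf :: "nat \<Rightarrow> nat pmf \<Rightarrow> nat set pmf" where
  "attr_set_pmf m P = bind_pmf P (\<lambda>k. pmf_of_set {S. S \<subseteq> {..<m} \<and> card S = k})"

definition rig_pmf :: "nat \<Rightarrow> nat \<Rightarrow> nat pmf \<Rightarrow> (nat \<Rightarrow> nat set) pmf" where
  "rig_pmf n m P = Pi_pmf {..<n} {} (\<lambda>_. attr_set_pmf m P)"

definition omega' :: "nat \<Rightarrow> nat \<Rightarrow> (nat \<Rightarrow> nat set) \<Rightarrow> nat" where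
  "omega' n m S = Max ((\<lambda>w. card {v \<in> {..<n}. w \<in> S v}) ` {..<m})"

definition slowly_varying :: "(real \<Rightarrow> real) \<Rightarrow> bool" where
  "slowly_varying L \<longleftrightarrow> L \<in> borel_measurable borel \<and>
     (\<forall>\<^sub>F x in at_top. L x > 0) \<and>
     (\<forall>c>0. ((\<lambda>x. L (c * x) / L x) \<longlongrightarrow> 1) at_top)"

text \<open>Y(n) = (n/m)^(1/2) X(n), X(n) ~ P(n).\<close>
definition Y_scale :: "nat \<Rightarrow> nat \<Rightarrow> real" where
  "Y_scale n m = sqrt (real n / real m)"

definition condition_A :: "(nat \<Rightarrow> nat) \<Rightarrow> (nat \<Rightarrow> nat pmf) \<Rightarrow> bool" where
  "condition_A m P \<longleftrightarrow>
     (\<lambda>n. measure_pmf.expectation (P n) (\<lambda>k. Y_scale n (m n) * real k)) \<in> O(\<lambda>_. 1)"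

definition condition_PL :: "real \<Rightarrow> (nat \<Rightarrow> nat) \<Rightarrow> (nat \<Rightarrow> nat pmf) \<Rightarrow> bool" where
  "condition_PL \<alpha> m P \<longleftrightarrow>
     (\<exists>L \<epsilon>0. slowly_varying L \<and> 0 < \<epsilon>0 \<and> \<epsilon>0 < 1/2 \<and>
        (\<forall>x :: nat \<Rightarrow> real.
           (\<forall>n. real n powr (1/2 - \<epsilon>0) \<le> x n \<and> x n \<le> real n powr (1/2 + \<epsilon>0)) \<longrightarrow>
           (\<lambda>n. measure_pmf.prob (P n) {k. Y_scale n (m n) * real k \<ge> x n})
             \<sim>[sequentially] (\<lambda>n. L (x n) * x n powr (- \<alpha>))))"

end

theory Submission
  imports Defs
begin


lemma card_subsets_mem:
  assumes "w < M" "0 < k"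
  shows "card {S. S \<subseteq> {..<M} \<and> card S = k \<and> w \<in> S} = (M - 1) choose (k - 1)"
proof -
  have "bij_betw (\<lambda>S. S - {w}) {S. S \<subseteq> {..<M} \<and> card S = k \<and> w \<in> S}
        {T. T \<subseteq> {..<M} - {w} \<and> card T = k - 1}"
  proof (rule bij_betw_byWitness[where f'="insert w"])
    show "\<forall>a\<in>{S. S \<subseteq> {..<M} \<and> card S = k \<and> w \<in> S}. insert w (a - {w}) = a" by auto
    show "\<forall>a'\<in>{T. T \<subseteq> {..<M} - {w} \<and> card T = k - 1}. insert w a' - {w} = a'" by auto
    show "(\<lambda>S. S - {w}) ` {S. S \<subseteq> {..<M} \<and> card S = k \<and> w \<in> S} \<subseteq> {T. T \<subseteq> {..<M} - {w} \<and> card T = k - 1}"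
      by (auto simp: card_Diff_singleton)
    show "insert w ` {T. T \<subseteq> {..<M} - {w} \<and> card T = k - 1} \<subseteq> {S. S \<subseteq> {..<M} \<and> card S = k \<and> w \<in> S}"
    proof
      fix S assume "S \<in> insert w ` {T. T \<subseteq> {..<M} - {w} \<and> card T = k - 1}"
      then obtain T where T: "T \<subseteq> {..<M} - {w}" "card T = k - 1" "S = insert w T" by auto
      have "finite T" using T(1) finite_subset by blast
      moreover have "w \<notin> T" using T(1) by auto
      ultimately have "card (insert w T) = Suc (card T)" by simp
      thus "S \<in> {S. S \<subseteq> {..<M} \<and> card S = k \<and> w \<in> S}" using T assms by auto
    qed
  qed
  hence "card {S. S \<subseteq> {..<M} \<and> card S = k \<and> w \<in> S} = card {T. T \<subseteq> {..<M} - {w} \<and> card T = k - 1}"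
    by (rule bij_betw_same_card)
  also have "\<dots> = card ({..<M} - {w}) choose (k - 1)" by (rule n_subsets) auto
  also have "card ({..<M} - {w}) = M - 1" using assms by auto
  finally show ?thesis .
qed

lemma attr_prob_k:
  assumes "w < M" "k \<le> M"
  shows "measure_pmf.prob (pmf_of_set {S. S \<subseteq> {..<M} \<and> card S = k}) {S. w \<in> S} = real k / real M"
proof -
  let ?F = "{S. S \<subseteq> {..<M} \<and> card S = k}"
  have fin: "finite ?F" by (rule finite_subset[of _ "Pow {..<M}"]) auto
  have cF: "card ?F = M choose k" by (rule n_subsets[of "{..<M}", simplified]) 
  have ne: "?F \<noteq> {}" using cF assms by (metis binomial_eq_0_iff card.empty not_less)
  have "measure_pmf.prob (pmf_of_set ?F) {S. w \<in> S} = card (?F \<inter> {S. w \<in> S}) / card ?F"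
    using fin ne by (simp add: measure_pmf_of_set)
  also have "?F \<inter> {S. w \<in> S} = {S. S \<subseteq> {..<M} \<and> card S = k \<and> w \<in> S}" by auto
  finally have eq: "measure_pmf.prob (pmf_of_set ?F) {S. w \<in> S} = card {S. S \<subseteq> {..<M} \<and> card S = k \<and> w \<in> S} / (M choose k)"
    using cF by simp
  show ?thesis
  proof (cases "k = 0")
    case True
    then show ?thesis using eq assms by (auto simp: card_eq_0_iff intro: finite_subset)  
  next
    case False
    have "real (k * (M choose k)) = real (M * ((M - 1) choose (k - 1)))"
      using times_binomial_minus1_eq[of k M] False by simp
    moreover have "(M choose k) > 0" using assms by simp
    ultimately have c: "real (M choose k) > 0" "real k * real (M choose k) = real M * real ((M - 1) choose (k - 1))"
      by simp_all
    define p where "p = measure_pmf.prob (pmf_of_set ?F) {S. w \<in> S}"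
    have pe: "p * real (M choose k) = real ((M - 1) choose (k - 1))"
      using eq card_subsets_mem[OF assms(1)] False c(1) unfolding p_def by (simp add: field_simps)
    have "(real M * p) * real (M choose k) = real k * real (M choose k)"
      using pe c(2) by (simp add: algebra_simps)
    hence "real M * p = real k" using c(1) by simp
    moreover have "real M > 0" using assms by simp
    ultimately show ?thesis unfolding p_def by (simp add: field_simps)
  qed
qed

lemma attr_prob:
  assumes "w < M" "set_pmf Q \<subseteq> {0..M}"
  shows "measure_pmf.prob (attr_set_pmf M Q) {S. w \<in> S} = measure_pmf.expectation Q real / real M"
proof -
  have "measure_pmf.prob (attr_set_pmf M Q) {S. w \<in> S}
     = (\<integral>k. measure_pmf.prob (pmf_of_set {S. S \<subseteq> {..<M} \<and> card S = k}) {S. w \<in> S} \<partial>measure_pmf Q)"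
    unfolding attr_set_pmf_def measure_pmf_bind
    by (subst measure_pmf.measure_bind[where N="count_space UNIV"]) (auto simp: measure_pmf_in_subprob_space)
  also have "\<dots> = (\<integral>k. real k / real M \<partial>measure_pmf Q)"
    using assms by (intro integral_cong_AE) (auto simp: AE_measure_pmf_iff attr_prob_k)
  also have "\<dots> = measure_pmf.expectation Q real / real M" by simp
  finally show ?thesis .
qed

lemma rig_prob_A:
  assumes "w < M" "set_pmf Q \<subseteq> {0..M}" "A \<subseteq> {..<n}"
  shows "measure_pmf.prob (rig_pmf n M Q) {S. \<forall>v\<in>A. w \<in> S v}
           = (measure_pmf.expectation Q real / real M) ^ card A"
proof -
  define B where "B = (\<lambda>v::nat. if v \<in> A then {S. w \<in> S} else (UNIV :: nat set set))"
  have "{S. \<forall>v\<in>A. w \<in> S v} = Pi {..<n} B" using assms(3) by (auto simp: B_def Pi_def)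
  hence "measure_pmf.prob (rig_pmf n M Q) {S. \<forall>v\<in>A. w \<in> S v}
       = (\<Prod>v\<in>{..<n}. measure_pmf.prob (attr_set_pmf M Q) (B v))"
    unfolding rig_pmf_def by (simp add: measure_Pi_pmf_Pi)
  also have "\<dots> = (\<Prod>v\<in>{..<n}. if v \<in> A then measure_pmf.expectation Q real / real M else 1)"
    by (intro prod.cong) (auto simp: B_def attr_prob[OF assms(1,2)])
  also have "\<dots> = (measure_pmf.expectation Q real / real M) ^ card A"
    using assms(3) by (simp add: prod.If_cases Int_absorb1)
  finally show ?thesis .
qed

lemma omega_bound:
  assumes "0 < M" "set_pmf Q \<subseteq> {0..M}" "0 \<le> x"
  shows "measure_pmf.prob (rig_pmf n M Q) {S. \<not> real (omega' n M S) \<le> x}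
     \<le> real M * real (n choose (nat \<lfloor>x\<rfloor> + 1)) * (measure_pmf.expectation Q real / real M) ^ (nat \<lfloor>x\<rfloor> + 1)"
proof -
  define t where "t = nat \<lfloor>x\<rfloor> + 1"
  define p where "p = measure_pmf.expectation Q real / real M"
  define \<A> where "\<A> = {A. A \<subseteq> {..<n} \<and> card A = t}"
  define E where "E = (\<lambda>(w::nat) (A::nat set). {S::nat \<Rightarrow> nat set. \<forall>v\<in>A. w \<in> S v})"
  have finA: "finite \<A>" unfolding \<A>_def by (rule finite_subset[of _ "Pow {..<n}"]) auto
  have cardA: "card \<A> = n choose t" unfolding \<A>_def using n_subsets[of "{..<n}" t] by simp
  have sub: "{S. \<not> real (omega' n M S) \<le> x} \<subseteq> (\<Union>w\<in>{..<M}. \<Union>A\<in>\<A>. E w A)"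
  proof
    fix S assume "S \<in> {S. \<not> real (omega' n M S) \<le> x}"
    hence gt: "real (omega' n M S) > x" by simp
    have "omega' n M S \<in> (\<lambda>w. card {v \<in> {..<n}. w \<in> S v}) ` {..<M}"
      unfolding omega'_def using assms(1) by (intro Max_in) auto
    then obtain w where w: "w < M" "omega' n M S = card {v \<in> {..<n}. w \<in> S v}" by auto
    have "t \<le> card {v \<in> {..<n}. w \<in> S v}"
    proof -
      have "real (card {v \<in> {..<n}. w \<in> S v}) > x" using gt w by simp
      hence "int (card {v \<in> {..<n}. w \<in> S v}) > \<lfloor>x\<rfloor>" by linarith
      thus ?thesis unfolding t_def using assms(3) by linarith
    qed
    then obtain A where A: "A \<subseteq> {v \<in> {..<n}. w \<in> S v}" "card A = t"
      by (meson obtain_subset_with_card_n)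
    hence "A \<in> \<A>" "S \<in> E w A" unfolding \<A>_def E_def by auto
    thus "S \<in> (\<Union>w\<in>{..<M}. \<Union>A\<in>\<A>. E w A)" using w by auto
  qed
  have "measure_pmf.prob (rig_pmf n M Q) {S. \<not> real (omega' n M S) \<le> x}
      \<le> measure_pmf.prob (rig_pmf n M Q) (\<Union>w\<in>{..<M}. \<Union>A\<in>\<A>. E w A)"
    using sub by (intro measure_pmf.finite_measure_mono) auto
  also have "\<dots> \<le> (\<Sum>w\<in>{..<M}. measure_pmf.prob (rig_pmf n M Q) (\<Union>A\<in>\<A>. E w A))"
    by (intro measure_pmf.finite_measure_subadditive_finite) auto
  also have "\<dots> \<le> (\<Sum>w\<in>{..<M}. \<Sum>A\<in>\<A>. measure_pmf.prob (rig_pmf n M Q) (E w A))"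
    by (intro sum_mono measure_pmf.finite_measure_subadditive_finite finA) auto
  also have "\<dots> = (\<Sum>w\<in>{..<M}. \<Sum>A\<in>\<A>. p ^ t)"
    by (intro sum.cong refl) (auto simp: E_def p_def \<A>_def rig_prob_A[OF _ assms(2)])
  also have "\<dots> = real M * real (n choose t) * p ^ t" using cardA by simp
  finally show ?thesis unfolding t_def p_def .
qed



lemma pow_fact_le_exp: "(x::real) \<ge> 0 \<Longrightarrow> x ^ k / fact k \<le> exp x"
proof -
  assume x: "x \<ge> 0"
  have s: "(\<lambda>n. x^n /\<^sub>R fact n) sums exp x" by (rule exp_converges)
  have "sum (\<lambda>n. x^n /\<^sub>R fact n) {k} \<le> suminf (\<lambda>n. x^n /\<^sub>R fact n)"
    using s x by (intro sum_le_suminf) (auto simp: sums_iff)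
  thus ?thesis using s by (simp add: sums_iff divide_inverse mult.commute)
qed

lemma choose_le_e: 
  assumes "0 < t"
  shows "real (n choose t) \<le> (exp 1 * real n / real t) ^ t"
proof (cases "t \<le> n")
  case False thus ?thesis by (simp add: binomial_eq_0)
next
  case True
  have "real (n choose t) = fact n / (fact t * fact (n - t))" using True by (rule binomial_fact)
  also have "\<dots> = (fact n / fact (n - t)) / fact t" by (simp add: field_simps)
  also have "fact n / fact (n - t) = real (fact n div fact (n - t))"
  proof -
    have "real (fact n div fact (n - t)) = real (fact n) / real (fact (n - t))"
      by (rule real_of_nat_div) (rule fact_dvd, simp)
    thus ?thesis by (metis of_nat_fact)
  qed
  also have "\<dots> \<le> real n ^ t" 
    using fact_div_fact_le_pow[OF True] by (metis of_nat_le_iff of_nat_power)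
  finally have 1: "real (n choose t) \<le> real n ^ t / fact t" by (simp add: divide_right_mono)
  have "real t ^ t / fact t \<le> exp (real t)" by (rule pow_fact_le_exp) simp
  hence 2: "real t ^ t \<le> exp (real t) * fact t" by (simp add: field_simps)
  have "real n ^ t / fact t \<le> (exp 1 * real n / real t) ^ t"
  proof -
    have "real n ^ t * real t ^ t \<le> real n ^ t * (exp (real t) * fact t)"
      using 2 by (intro mult_left_mono) auto
    also have "exp (real t) = exp 1 ^ t" by (simp add: exp_of_nat_mult[symmetric])
    finally have "real n ^ t * real t ^ t \<le> (exp 1 * real n) ^ t * fact t"
      by (simp add: power_mult_distrib algebra_simps)
    thus ?thesis using assms by (simp add: field_simps power_divide)
  qed
  with 1 show ?thesis by linarith
qed

lemma mono_M:
  fixes M M0 c :: real and t :: nat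
  assumes "0 < M0" "M0 \<le> M" "2 \<le> t" "0 \<le> c"
  shows "M * (c / sqrt M) ^ t \<le> M0 * (c / sqrt M0) ^ t"
proof -
  have M: "0 < M" using assms by simp
  define q where "q = sqrt M0 / sqrt M"
  have q: "0 \<le> q" "q \<le> 1" using assms by (auto simp: q_def)
  have "c / sqrt M = (c / sqrt M0) * q" using assms by (simp add: q_def)
  hence "(c / sqrt M) ^ t = ((c / sqrt M0) * q) ^ t" by (simp only:)
  also have "\<dots> = (c / sqrt M0) ^ t * q ^ t" by (rule power_mult_distrib)
  also have "\<dots> \<le> (c / sqrt M0) ^ t * q ^ 2"
    using q assms by (intro mult_left_mono power_decreasing) auto
  also have "q ^ 2 = M0 / M" using assms M by (simp add: q_def power_divide)
  finally have "M * (c / sqrt M) ^ t \<le> M * ((c / sqrt M0) ^ t * (M0 / M))"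
    using M by (intro mult_left_mono) auto
  thus ?thesis using M by (simp add: field_simps)
qed

lemma key_bound:
  fixes M n t :: nat and \<mu> B C \<beta> \<gamma> :: real
  assumes "0 < n" "0 < M" "2 \<le> t" "0 \<le> \<mu>" "sqrt (real n / real M) * \<mu> \<le> B"
    "0 < C" "C * real n powr \<beta> \<le> real M" "real n powr \<gamma> \<le> real t"
  shows "real M * real (n choose t) * (\<mu> / real M) ^ t
     \<le> C * real n powr \<beta> * (exp 1 * B / sqrt C * real n powr (1/2 - \<beta>/2 - \<gamma>)) ^ t"
proof -
  define M0 where "M0 = C * real n powr \<beta>"
  have M0: "0 < M0" using assms by (simp add: M0_def)
  have B: "0 \<le> B" using assms(4,5) by (metis order.trans real_sqrt_ge_zero zero_le_divide_iff mult_nonneg_nonneg of_nat_0_le_iff)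
  define c where "c = exp 1 * B * sqrt n / t"
  have c: "0 \<le> c" using B by (simp add: c_def)
  have sn: "0 < sqrt (real n)" "0 < sqrt (real M)" using assms by auto
  have mu: "\<mu> \<le> B * sqrt M / sqrt n"
    using assms(5) sn by (simp add: real_sqrt_divide field_simps)
  have 1: "real (n choose t) * (\<mu> / real M) ^ t \<le> (exp 1 * real n / real t) ^ t * (\<mu> / real M) ^ t"
    using assms by (intro mult_right_mono choose_le_e) auto
  have 2: "exp 1 * real n / real t * (\<mu> / real M) \<le> c / sqrt M"
  proof -
    have "exp 1 * real n / real t * (\<mu> / real M) \<le> exp 1 * real n / real t * (B * sqrt M / sqrt n / real M)"
      using mu assms by (intro mult_left_mono divide_right_mono) auto
    also have "\<dots> = c / sqrt M"
    proof -
      have aux: "\<And>s q e tt. 0 < s \<Longrightarrow> 0 < q \<Longrightarrow> 0 < tt \<Longrightarrow>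
          e * (s * s) / tt * (B * q / s / (q * q)) = e * B * s / tt / q"
        by (simp add: field_simps)
      have "real n = sqrt n * sqrt n" "real M = sqrt M * sqrt M" by simp_all
      hence "exp 1 * real n / real t * (B * sqrt M / sqrt n / real M)
          = exp 1 * (sqrt n * sqrt n) / real t * (B * sqrt M / sqrt n / (sqrt M * sqrt M))"
        by (simp only:)
      also have "\<dots> = exp 1 * B * sqrt n / real t / sqrt M"
        using sn assms(3) by (intro aux) auto
      finally show ?thesis unfolding c_def .
    qed
    finally show ?thesis .
  qed
  have "real M * real (n choose t) * (\<mu> / real M) ^ t \<le> real M * (c / sqrt M) ^ t"
  proof -
    have "real (n choose t) * (\<mu> / real M) ^ t \<le> (exp 1 * real n / real t * (\<mu> / real M)) ^ t"
      using 1 by (simp only: power_mult_distrib)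
    also have "\<dots> \<le> (c / sqrt M) ^ t" using 2 assms by (intro power_mono) auto
    finally show ?thesis using assms by (simp add: mult.assoc mult_left_mono)
  qed
  also have "\<dots> \<le> M0 * (c / sqrt M0) ^ t"
    using mono_M[OF M0 _ assms(3) c] assms(7) by (simp add: M0_def)
  also have "c / sqrt M0 \<le> exp 1 * B / sqrt C * real n powr (1/2 - \<beta>/2 - \<gamma>)"
  proof -
    have tpos: "0 < real n powr \<gamma>" using assms by simp
    have "c / sqrt M0 = exp 1 * B / sqrt C * (sqrt n / sqrt (real n powr \<beta>)) / real t"
      unfolding c_def M0_def using assms by (simp add: real_sqrt_mult field_simps)
    also have "sqrt n / sqrt (real n powr \<beta>) = real n powr (1/2 - \<beta>/2)"
    proof -
      have "sqrt n = real n powr (1/2)" by (simp add: powr_half_sqrt)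
      moreover have "sqrt (real n powr \<beta>) = (real n powr \<beta>) powr (1/2)" by (simp add: powr_half_sqrt)
      moreover have "(real n powr \<beta>) powr (1/2) = real n powr (\<beta>/2)" by (simp add: powr_powr)
      ultimately show ?thesis by (simp add: powr_diff)
    qed
    also have "exp 1 * B / sqrt C * real n powr (1/2 - \<beta>/2) / real t
        \<le> exp 1 * B / sqrt C * real n powr (1/2 - \<beta>/2) / real n powr \<gamma>"
      using assms tpos B by (intro divide_left_mono) auto
    also have "\<dots> = exp 1 * B / sqrt C * real n powr (1/2 - \<beta>/2 - \<gamma>)"
      by (simp add: powr_diff)
    finally show ?thesis .
  qed
  hence "M0 * (c / sqrt M0) ^ t \<le> M0 * (exp 1 * B / sqrt C * real n powr (1/2 - \<beta>/2 - \<gamma>)) ^ t"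
    using M0 c by (intro mult_left_mono power_mono) auto
  finally show ?thesis by (simp add: M0_def)
qed


theorem mainTheorem9:
  fixes \<alpha> \<beta> :: real and m :: "nat \<Rightarrow> nat" and P :: "nat \<Rightarrow> nat pmf"
  assumes "1 < \<alpha>" "\<alpha> < 2"
    and "\<And>n. 0 < m n"
    and "\<And>n. set_pmf (P n) \<subseteq> {0..m n}"
    and "filterlim m at_top sequentially"
    and "condition_A m P"
    and "condition_PL \<alpha> m P"
    and "\<beta> > \<alpha> - 1"
    and "(\<lambda>n. real (m n)) \<in> \<Omega>(\<lambda>n. real n powr \<beta>)"
  shows "\<exists>\<delta>>0. (\<lambda>n. measure_pmf.prob (rig_pmf n (m n) (P n))
            {S. real (omega' n (m n) S) \<le> real n powr (1 - \<alpha>/2 - \<delta>)}) \<longlonglongrightarrow> 1"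
proof -
  define \<delta> where "\<delta> = min ((\<beta> - \<alpha> + 1) / 4) ((2 - \<alpha>) / 4)"
  have \<delta>: "0 < \<delta>" using assms(2,8) by (simp add: \<delta>_def)
  define \<gamma> where "\<gamma> = 1 - \<alpha>/2 - \<delta>"
  define \<kappa> where "\<kappa> = \<gamma> + \<beta>/2 - 1/2"
  have d1: "\<delta> \<le> (\<beta> - \<alpha> + 1)/4" "\<delta> \<le> (2 - \<alpha>)/4" unfolding \<delta>_def by (simp_all only: min.cobounded1 min.cobounded2)
  have \<kappa>: "0 < \<kappa>" unfolding \<kappa>_def \<gamma>_def using d1 assms(8) by (simp add: field_simps)
  have \<gamma>: "0 < \<gamma>" unfolding \<gamma>_def using d1 assms(2) by (simp add: field_simps)
  define \<mu> where "\<mu> = (\<lambda>n. measure_pmf.expectation (P n) real)"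
  obtain B where B: "B > 0" and evB: "eventually (\<lambda>n. norm (measure_pmf.expectation (P n) (\<lambda>k. Y_scale n (m n) * real k)) \<le> B * norm (1::real)) sequentially"
    using assms(6) unfolding condition_A_def by (elim landau_o.bigE) auto
  obtain C where C: "C > 0" and evC: "eventually (\<lambda>n. norm (real (m n)) \<ge> C * norm (real n powr \<beta>)) sequentially"
    using assms(9) by (elim landau_omega.bigE) auto
  define K where "K = exp 1 * B / sqrt C"
  define N :: nat where "N = nat \<lceil>\<beta> / \<kappa>\<rceil> + 2"
  have N2: "2 \<le> N" by (simp add: N_def)
  have N\<beta>: "\<beta> - \<kappa> * real N < 0"
  proof -
    have "\<beta> / \<kappa> < real N" unfolding N_def by linarith
    thus ?thesis using \<kappa> by (simp add: field_simps)
  qed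
  define t where "t = (\<lambda>n::nat. nat \<lfloor>real n powr \<gamma>\<rfloor> + 1)"
  have tge: "real n powr \<gamma> \<le> real (t n)" for n
    unfolding t_def by (simp add: of_nat_nat) linarith
  have lim1: "(\<lambda>n::nat. K * real n powr (- \<kappa>)) \<longlonglongrightarrow> 0"
    using \<kappa> by (intro tendsto_mult_right_zero tendsto_neg_powr filterlim_real_sequentially) auto
  have ev1: "eventually (\<lambda>n. K * real n powr (- \<kappa>) < 1) sequentially"
    using order_tendstoD(2)[OF lim1] by simp
  have ev2: "eventually (\<lambda>n. real N \<le> real n powr \<gamma>) sequentially"
  proof (rule eventually_sequentiallyI[of "nat \<lceil>real N powr (1/\<gamma>)\<rceil>"])
    fix n assume "nat \<lceil>real N powr (1/\<gamma>)\<rceil> \<le> n"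
    hence "real N powr (1/\<gamma>) \<le> real n" by linarith
    hence "(real N powr (1/\<gamma>)) powr \<gamma> \<le> real n powr \<gamma>" using \<gamma> by (intro powr_mono2) auto
    thus "real N \<le> real n powr \<gamma>" using \<gamma> by (simp add: powr_powr)
  qed
  define g where "g = (\<lambda>n::nat. C * K ^ N * real n powr (\<beta> - \<kappa> * real N))"
  have limg: "g \<longlonglongrightarrow> 0"
    unfolding g_def using N\<beta> by (intro tendsto_mult_right_zero tendsto_neg_powr filterlim_real_sequentially) auto
  define q where "q = (\<lambda>n. measure_pmf.prob (rig_pmf n (m n) (P n))
            {S. \<not> real (omega' n (m n) S) \<le> real n powr \<gamma>})"
  have evq: "eventually (\<lambda>n. q n \<le> g n) sequentially"
    using evB evC ev1 ev2 eventually_gt_at_top[of 0]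
  proof eventually_elim
    case (elim n)
    have mu0: "0 \<le> \<mu> n" unfolding \<mu>_def by (intro integral_nonneg_AE) auto
    have Ys: "sqrt (real n / real (m n)) * \<mu> n \<le> B"
      using elim(1) mu0 by (simp add: \<mu>_def Y_scale_def)
    have Mge: "C * real n powr \<beta> \<le> real (m n)" using elim(2) by simp
    have tN: "N \<le> t n" using elim(4) tge[of n] by linarith
    have "q n \<le> real (m n) * real (n choose t n) * (\<mu> n / real (m n)) ^ t n"
      unfolding q_def t_def \<mu>_def by (rule omega_bound[OF assms(3,4)]) simp
    also have "\<dots> \<le> C * real n powr \<beta> * (K * real n powr (1/2 - \<beta>/2 - \<gamma>)) ^ t n"
      unfolding K_def using N2 tN by (intro key_bound elim(5) assms(3) mu0 Ys C Mge tge) auto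
    also have "real n powr (1/2 - \<beta>/2 - \<gamma>) = real n powr (- \<kappa>)"
      by (intro arg_cong[where f="\<lambda>x. real n powr x"]) (simp add: \<kappa>_def field_simps)
    also have "(K * real n powr (- \<kappa>)) ^ t n \<le> (K * real n powr (- \<kappa>)) ^ N"
      using elim(3) tN B C by (intro power_decreasing) (auto simp: K_def)
    hence "C * real n powr \<beta> * (K * real n powr (- \<kappa>)) ^ t n \<le> C * real n powr \<beta> * (K * real n powr (- \<kappa>)) ^ N"
      using C by (intro mult_left_mono) auto
    also have "C * real n powr \<beta> * (K * real n powr (- \<kappa>)) ^ N = g n"
      using elim(5) by (simp add: g_def power_mult_distrib powr_realpow[symmetric] powr_powr powr_add[symmetric] algebra_simps)
    finally show ?case .
  qed
  have q0: "q n \<ge> 0" for n unfolding q_def by simp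
  have limq: "q \<longlonglongrightarrow> 0"
    by (rule tendsto_sandwich[OF _ evq tendsto_const limg]) (simp add: q0)
  have eq: "measure_pmf.prob (rig_pmf n (m n) (P n)) {S. real (omega' n (m n) S) \<le> real n powr \<gamma>} = 1 - q n" for n
  proof -
    have "{S. real (omega' n (m n) S) \<le> real n powr \<gamma>} = space (measure_pmf (rig_pmf n (m n) (P n)))
        - {S. \<not> real (omega' n (m n) S) \<le> real n powr \<gamma>}" by auto
    moreover have "measure_pmf.prob (rig_pmf n (m n) (P n)) (space (measure_pmf (rig_pmf n (m n) (P n)))
        - {S. \<not> real (omega' n (m n) S) \<le> real n powr \<gamma>}) = 1 - q n"
      unfolding q_def by (rule measure_pmf.prob_compl) simp
    ultimately show ?thesis by simp
  qed
  have "(\<lambda>n. 1 - q n) \<longlonglongrightarrow> 1 - 0" by (intro tendsto_diff tendsto_const limq)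
  hence "(\<lambda>n. measure_pmf.prob (rig_pmf n (m n) (P n))
            {S. real (omega' n (m n) S) \<le> real n powr (1 - \<alpha>/2 - \<delta>)}) \<longlonglongrightarrow> 1"
    using eq unfolding \<gamma>_def by simp
  thus ?thesis using \<delta> by blast
qed

end
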